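(* Let $D=\{\alpha_1,\dots,\alpha_r\}\subset(0,1)$, viewed in $\mathbb{T}=\mathbb{R}/\mathbb{Z}$, be such that $\{1,\alpha_1,\dots,\alpha_r\}$ is linearly independent over $\mathbb{Q}$. Then $\mathrm{Md}_{\mathbb{T}}(D)=1/2$, and no Borel $D$-avoiding set $A\subset\mathbb{T}$ satisfies $\mu(A)=1/2$.
   Context: $\mu$ is Haar probability measure on $\mathbb{T}$; $A$ is $D$-avoiding if $(A-A)\cap D=\emptyset$. $\mathrm{Md}_{\mathbb{T}}(D)=\sup\{\mu(A): A\subset\mathbb{T}\text{ Borel},\ (A-A)\cap D=\emptyset\}$. *)

theory Defs
  imports "HOL-Analysis.Analysis"
begin

text \<open>The circle group T = R/Z is represented by the fundamental domain [0,1);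
  the difference of two points x, y of T is represented by frac (x - y), and
  Haar probability measure on T is Lebesgue measure restricted to [0,1).
  A subset D of (0,1) is thereby viewed as a subset of T.\<close>

definition torus_avoiding :: "real set \<Rightarrow> real set \<Rightarrow> bool" where
  "torus_avoiding D A \<longleftrightarrow>
     A \<in> sets borel \<and> A \<subseteq> {0..<1} \<and> (\<forall>x\<in>A. \<forall>y\<in>A. frac (x - y) \<notin> D)"

definition Md_T :: "real set \<Rightarrow> real" where
  "Md_T D = Sup {measure lborel A | A. torus_avoiding D A}"

definition one_Q_lin_indep :: "real set \<Rightarrow> bool" where
  "one_Q_lin_indep D \<longleftrightarrow>
     (\<forall>(c0::rat) (c::real \<Rightarrow> rat).
        of_rat c0 + (\<Sum>a\<in>D. of_rat (c a) * a) = 0 \<longrightarrow> c0 = 0 \<and> (\<forall>a\<in>D. c a = 0))"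

end

theory Submission
  imports Defs
begin


lemma ball_shift_diff:
  fixes x r s :: real
  assumes "s \<ge> 0"
  shows "ball x r - (+) s ` ball x r \<subseteq> {x - r .. x - r + s}"
proof
  fix y assume y: "y \<in> ball x r - (+) s ` ball x r"
  then have "y - s \<notin> ball x r" by (metis DiffE add_diff_cancel_left' diff_add_cancel image_eqI)
  with y assms show "y \<in> {x - r .. x - r + s}" by (auto simp: dist_real_def abs_if split: if_splits)
qed

lemma steinhaus:
  fixes A :: "real set"
  assumes A: "A \<in> lmeasurable" "bounded A" and pos: "measure lebesgue A > 0"
  shows "\<exists>\<eta>>0. \<forall>s. 0 < s \<and> s < \<eta> \<longrightarrow> measure lebesgue (A \<inter> (+) s ` A) > 0"
proof -
  define \<delta> where "\<delta> = measure lebesgue A / 3"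
  have \<delta>: "\<delta> > 0" using pos by (simp add: \<delta>_def)
  have Aleb: "A \<in> sets lebesgue" using A by (simp add: fmeasurable_def)
  obtain T where T: "open T" "A \<subseteq> T" "T - A \<in> lmeasurable" "emeasure lebesgue (T - A) < ennreal \<delta>"
    using sets_lebesgue_outer_open[OF Aleb \<delta>] by blast
  obtain C where C: "closed C" "C \<subseteq> A" "A - C \<in> lmeasurable" "emeasure lebesgue (A - C) < ennreal \<delta>"
    using sets_lebesgue_inner_closed[OF Aleb \<delta>] by blast
  have mTA: "measure lebesgue (T - A) < \<delta>"
    using T(3,4) \<delta> by (simp add: emeasure_eq_measure2 ennreal_less_iff)
  have mAC: "measure lebesgue (A - C) < \<delta>"
    using C(3,4) \<delta> by (simp add: emeasure_eq_measure2 ennreal_less_iff)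
  have "compact C" using C(1,2) A(2) by (meson bounded_subset compact_eq_bounded_closed)
  define r where "r = (\<lambda>x. SOME e. e > 0 \<and> ball x e \<subseteq> T)"
  have r: "r x > 0 \<and> ball x (r x) \<subseteq> T" if "x \<in> T" for x
  proof -
    have "\<exists>e. e > 0 \<and> ball x e \<subseteq> T" using T(1) that open_contains_ball by blast
    then show ?thesis unfolding r_def by (rule someI_ex)
  qed
  have "C \<subseteq> \<Union> ((\<lambda>x. ball x (r x)) ` C)"
  proof
    fix x assume x: "x \<in> C"
    then have "x \<in> T" using C(2) T(2) by blast
    then have "x \<in> ball x (r x)" using r[of x] by simp
    then show "x \<in> \<Union> ((\<lambda>x. ball x (r x)) ` C)" using x by blast
  qed
  then obtain K where K: "K \<subseteq> C" "finite K" "C \<subseteq> \<Union> ((\<lambda>x. ball x (r x)) ` K)"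
    using compactE_image[OF \<open>compact C\<close>, of C "\<lambda>x. ball x (r x)"] by auto
  define U where "U = \<Union> ((\<lambda>x. ball x (r x)) ` K)"
  have UT: "U \<subseteq> T" using K C T r unfolding U_def by blast
  have CU: "C \<subseteq> U" using K unfolding U_def by simp
  have Ulm: "U \<in> lmeasurable"
    unfolding U_def using K(2) by (intro lmeasurable_open) auto
  have Tleb: "T \<in> sets lebesgue" using T(1) by simp
  have mUA: "measure lebesgue (U - A) < \<delta>"
  proof -
    have "measure lebesgue (U - A) \<le> measure lebesgue (T - A)"
      by (rule measure_mono_fmeasurable) (use UT Ulm Aleb T(3) in auto)
    then show ?thesis using mTA by simp
  qed
  have mAU: "measure lebesgue (A - U) < \<delta>"
  proof -
    have "measure lebesgue (A - U) \<le> measure lebesgue (A - C)"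
      by (rule measure_mono_fmeasurable) (use CU Ulm Aleb C(3) in auto)
    then show ?thesis using mAC by simp
  qed
  define n where "n = card K"
  have shiftU: "measure lebesgue (U - (+) s ` U) \<le> real n * s" if "s \<ge> 0" for s :: real
  proof -
    have sub: "U - (+) s ` U \<subseteq> (\<Union>x\<in>K. {x - r x .. x - r x + s})"
    proof
      fix y assume "y \<in> U - (+) s ` U"
      then obtain x where x: "x \<in> K" "y \<in> ball x (r x)" "y \<notin> (+) s ` ball x (r x)"
        unfolding U_def by blast
      then have "y \<in> {x - r x .. x - r x + s}" using ball_shift_diff[OF that, of x "r x"] by blast
      with x show "y \<in> (\<Union>x\<in>K. {x - r x .. x - r x + s})" by blast
    qed
    have "measure lebesgue (U - (+) s ` U) \<le> measure lebesgue (\<Union>x\<in>K. {x - r x .. x - r x + s})"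
      by (rule measure_mono_fmeasurable[OF sub]) (use Ulm measurable_translation K(2) in auto)
    also have "\<dots> \<le> (\<Sum>x\<in>K. measure lebesgue {x - r x .. x - r x + s})"
      by (rule measure_subadditive_finite) (use K(2) that in auto)
    also have "\<dots> = (\<Sum>x\<in>K. s)" using that by simp
    finally show ?thesis by (simp add: n_def)
  qed
  define \<eta> where "\<eta> = \<delta> / (n + 1)"
  have \<eta>: "\<eta> > 0" using \<delta> by (simp add: \<eta>_def)
  show ?thesis
  proof (intro exI conjI allI impI)
    show "\<eta> > 0" by fact
    fix s :: real assume s: "0 < s \<and> s < \<eta>"
    have ns: "real n * s \<le> \<delta>"
    proof -
      have "real n * s \<le> (real n+1) * s" using s by (simp add: mult_right_mono)
      also have "\<dots> \<le> (real n+1) * \<eta>" using s by (intro mult_left_mono) auto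
      also have "\<dots> = \<delta>" unfolding \<eta>_def by (simp add: field_simps)
      finally show ?thesis .
    qed
    have As: "(+) s ` A \<in> lmeasurable" using A(1) by (rule measurable_translation)
    have Us: "(+) s ` U \<in> lmeasurable" using Ulm by (rule measurable_translation)
    have eq: "(+) s ` U - (+) s ` A = (+) s ` (U - A)" by auto
    have sub: "A - (+) s ` A \<subseteq> (A - U) \<union> (U - (+) s ` U) \<union> (+) s ` (U - A)" by auto
    have "measure lebesgue (A - (+) s ` A) \<le> measure lebesgue ((A - U) \<union> (U - (+) s ` U) \<union> (+) s ` (U - A))"
      by (rule measure_mono_fmeasurable[OF sub])
         (use A(1) As Ulm Us in \<open>auto intro!: fmeasurable.Un fmeasurable_Diff measurable_translation\<close>)
    also have "\<dots> \<le> measure lebesgue (A - U) + measure lebesgue (U - (+) s ` U) + measure lebesgue ((+) s ` (U - A))"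
    proof -
      have m1: "A - U \<in> sets lebesgue" "U - (+) s ` U \<in> sets lebesgue" "(+) s ` (U - A) \<in> sets lebesgue"
        using A(1) Ulm Us measurable_translation[OF fmeasurable_Diff[OF Ulm, of A]] by (auto intro!: fmeasurable_Diff)
      have "measure lebesgue ((A - U) \<union> (U - (+) s ` U) \<union> (+) s ` (U - A)) \<le> measure lebesgue ((A - U) \<union> (U - (+) s ` U)) + measure lebesgue ((+) s ` (U - A))"
        using m1 by (intro measure_Un_le) auto
      moreover have "measure lebesgue ((A - U) \<union> (U - (+) s ` U)) \<le> measure lebesgue (A - U) + measure lebesgue (U - (+) s ` U)"
        using m1 by (intro measure_Un_le) auto
      ultimately show ?thesis by linarith
    qed
    also have "\<dots> < 3 * \<delta>" using mAU shiftU[of s] s mUA ns by (simp add: measure_translation)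
    finally have lt: "measure lebesgue (A - (+) s ` A) < measure lebesgue A" by (simp add: \<delta>_def)
    have "measure lebesgue A \<le> measure lebesgue (A \<inter> (+) s ` A) + measure lebesgue (A - (+) s ` A)"
    proof -
      have "A = (A \<inter> (+) s ` A) \<union> (A - (+) s ` A)" by blast
      then have "measure lebesgue A = measure lebesgue ((A \<inter> (+) s ` A) \<union> (A - (+) s ` A))" by simp
      also have "\<dots> \<le> measure lebesgue (A \<inter> (+) s ` A) + measure lebesgue (A - (+) s ` A)"
        by (rule measure_Un_le) (use A(1) As in auto)
      finally show ?thesis .
    qed
    with lt show "measure lebesgue (A \<inter> (+) s ` A) > 0" by linarith
  qed
qed


lemma irrat_of_D:
  assumes "finite D" "one_Q_lin_indep D" "\<alpha> \<in> D"
  shows "\<alpha> \<notin> \<rat>"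
proof
  assume "\<alpha> \<in> \<rat>"
  then obtain q where q: "\<alpha> = of_rat q" by (auto elim: Rats_cases)
  define c where "c = (\<lambda>a::real. if a = \<alpha> then (1::rat) else 0)"
  have "(\<Sum>a\<in>D. of_rat (c a) * a) = \<alpha>"
  proof -
    have "(\<Sum>a\<in>D. of_rat (c a) * a) = (\<Sum>a\<in>D. if a = \<alpha> then a else 0)"
      by (rule sum.cong) (auto simp: c_def)
    also have "\<dots> = \<alpha>" using assms(1,3) by (simp add: sum.delta)
    finally show ?thesis .
  qed
  then have "of_rat (-q) + (\<Sum>a\<in>D. of_rat (c a) * a) = 0" using q by (simp add: of_rat_minus)
  with assms(2) have "c \<alpha> = 0" unfolding one_Q_lin_indep_def using assms(3)
    by (metis (no_types, lifting))
  then show False by (simp add: c_def)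
qed

lemma AE_translate:
  fixes a :: real
  assumes "AE x in lebesgue. P x"
  shows "AE x in lebesgue. P (x - a)"
proof -
  obtain N where N0: "{x\<in>space lebesgue. \<not> P x} \<subseteq> N" and N2: "N \<in> null_sets lebesgue"
    by (rule AE_E[OF assms]) (metis null_setsI)
  have N: "{x. \<not> P x} \<subseteq> N" "N \<in> null_sets lebesgue" using N0 N2 by simp_all
  have Nl: "N \<in> lmeasurable" "measure lebesgue N = 0"
    using N(2) by (simp_all add: fmeasurableI_null_sets measure_eq_0_null_sets)
  have tl: "(+) a ` N \<in> lmeasurable" using Nl(1) by (rule measurable_translation)
  have m0: "measure lebesgue ((+) a ` N) = 0" using Nl(2) by (simp only: measure_translation)
  have em: "emeasure lebesgue ((+) a ` N) = 0" using emeasure_eq_measure2[OF tl] m0 by simp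
  have nul: "(+) a ` N \<in> null_sets lebesgue" by (rule null_setsI[OF em fmeasurableD[OF tl]])
  have sub: "{x. \<not> P (x - a)} \<subseteq> (+) a ` N"
  proof
    fix x assume "x \<in> {x. \<not> P (x - a)}"
    then have "x - a \<in> N" using N(1) by auto
    then show "x \<in> (+) a ` N" by (metis add.commute diff_add_cancel image_eqI)
  qed
  show ?thesis by (rule AE_I[OF _ em fmeasurableD[OF tl]]) (use sub in simp)
qed

lemma null_translate:
  fixes a :: real
  assumes "N \<in> null_sets lebesgue"
  shows "(+) a ` N \<in> null_sets lebesgue"
proof -
  have Nl: "N \<in> lmeasurable" "measure lebesgue N = 0"
    using assms by (simp_all add: fmeasurableI_null_sets measure_eq_0_null_sets)
  have tl: "(+) a ` N \<in> lmeasurable" using Nl(1) by (rule measurable_translation)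
  have m0: "measure lebesgue ((+) a ` N) = 0" using Nl(2) by (simp only: measure_translation)
  have em: "emeasure lebesgue ((+) a ` N) = 0" using emeasure_eq_measure2[OF tl] m0 by simp
  show ?thesis by (rule null_setsI[OF em fmeasurableD[OF tl]])
qed

lemma frac_shift_int: "frac (frac y - a) = frac (y - a)"
proof -
  have "y - a = (frac y - a) + of_int \<lfloor>y\<rfloor>" by (simp add: frac_def)
  then show ?thesis by (metis frac_add_of_int_right)
qed



lemma Ico_lm:
  fixes a b :: real assumes "a \<le> b"
  shows "{a..<b} \<in> lmeasurable" "measure lebesgue {a..<b} = b - a"
proof -
  have "bounded {a..<b}" by (rule bounded_subset[of "{a..b}"]) (auto simp: bounded_closed_interval)
  then show "{a..<b} \<in> lmeasurable" by (rule bounded_set_imp_lmeasurable) simp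
  have "measure lebesgue {a..<b} = measure lborel {a..<b}" by (rule measure_completion) simp
  then show "measure lebesgue {a..<b} = b - a" using assms by simp
qed

lemma upper_bound:
  fixes A :: "real set" and \<alpha> :: real
  assumes Ab: "A \<in> sets borel" "A \<subseteq> {0..<1}" and av: "\<forall>x\<in>A. \<forall>y\<in>A. frac (x - y) \<noteq> \<alpha>"
    and \<alpha>: "0 < \<alpha>" "\<alpha> < 1" "\<alpha> \<notin> \<rat>"
  shows "measure lborel A < 1/2"
proof -
  have Aleb: "A \<in> sets lebesgue" using Ab(1) by simp
  have bA: "bounded A" by (rule bounded_subset[of "{0..1}"]) (use Ab(2) in \<open>auto simp: bounded_closed_interval\<close>)
  have Al: "A \<in> lmeasurable" using bA Aleb by (rule bounded_set_imp_lmeasurable)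
  have mA: "measure lborel A = measure lebesgue A" using Ab(1) by simp
  define A1 where "A1 = (+) \<alpha> ` (A \<inter> {0..<1-\<alpha>})"
  define A2 where "A2 = (+) (\<alpha> - 1) ` (A \<inter> {1-\<alpha>..<1})"
  define A' where "A' = {y \<in> {0..<1}. frac (y - \<alpha>) \<in> A}"
  have L1: "A \<inter> {0..<1-\<alpha>} \<in> lmeasurable" "A \<inter> {1-\<alpha>..<1} \<in> lmeasurable"
    using Al by (auto intro: fmeasurable_Int_fmeasurable)
  have A1l: "A1 \<in> lmeasurable" unfolding A1_def by (rule measurable_translation[OF L1(1)])
  have A2l: "A2 \<in> lmeasurable" unfolding A2_def by (rule measurable_translation[OF L1(2)])
  have A'eq: "A' = A1 \<union> A2"
  proof (rule set_eqI)
    fix y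
    show "y \<in> A' \<longleftrightarrow> y \<in> A1 \<union> A2"
    proof
      assume y: "y \<in> A'"
      then have y01: "0 \<le> y" "y < 1" and fy: "frac (y - \<alpha>) \<in> A" by (auto simp: A'_def)
      show "y \<in> A1 \<union> A2"
      proof (cases "y \<ge> \<alpha>")
        case True
        then have "frac (y - \<alpha>) = y - \<alpha>" using y01 \<alpha> by (intro frac_eq_id) auto
        then have "y - \<alpha> \<in> A \<inter> {0..<1-\<alpha>}" using fy True y01 by auto
        then have "\<alpha> + (y - \<alpha>) \<in> A1" unfolding A1_def by blast
        then show ?thesis by simp
      next
        case False
        have "frac (y - \<alpha>) = frac (y - \<alpha> + 1)" by (simp add: frac_1_eq)
        also have "\<dots> = y - \<alpha> + 1" using False y01 \<alpha> by (intro frac_eq_id) auto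
        finally have "y - \<alpha> + 1 \<in> A \<inter> {1-\<alpha>..<1}" using fy False y01 by auto
        then have "(\<alpha> - 1) + (y - \<alpha> + 1) \<in> A2" unfolding A2_def by blast
        then show ?thesis by simp
      qed
    next
      assume "y \<in> A1 \<union> A2"
      then show "y \<in> A'"
      proof
        assume "y \<in> A1"
        then obtain z where z: "z \<in> A" "0 \<le> z" "z < 1 - \<alpha>" "y = \<alpha> + z" unfolding A1_def by auto
        then have "frac (y - \<alpha>) = z" using \<alpha> by (simp add: frac_eq)
        then show "y \<in> A'" using z \<alpha> by (auto simp: A'_def)
      next
        assume "y \<in> A2"
        then obtain z where z: "z \<in> A" "1 - \<alpha> \<le> z" "z < 1" "y = (\<alpha> - 1) + z" unfolding A2_def by auto
        then have "y - \<alpha> = z - 1" by simp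
        then have "frac (y - \<alpha>) = frac z" by (metis frac_1_eq diff_add_cancel)
        also have "\<dots> = z" using z \<alpha> by (intro frac_eq_id) auto
        finally show "y \<in> A'" using z \<alpha> by (auto simp: A'_def)
      qed
    qed
  qed
  have A12: "A1 \<inter> A2 = {}"
  proof -
    have "A1 \<subseteq> {\<alpha>..}" unfolding A1_def by auto
    moreover have "A2 \<subseteq> {..<\<alpha>}" unfolding A2_def by auto
    ultimately show ?thesis by fastforce
  qed
  have A'l: "A' \<in> lmeasurable" using A'eq A1l A2l by auto
  have "measure lebesgue A' = measure lebesgue A1 + measure lebesgue A2"
  proof -
    have "A2 - A1 = A2" using A12 by blast
    then show ?thesis using measure_Un2[OF A1l A2l] A'eq by simp
  qed
  also have "\<dots> = measure lebesgue (A \<inter> {0..<1-\<alpha>}) + measure lebesgue (A \<inter> {1-\<alpha>..<1})"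
    unfolding A1_def A2_def by (simp only: measure_translation)
  also have "\<dots> = measure lebesgue A"
  proof -
    have e1: "A = (A \<inter> {0..<1-\<alpha>}) \<union> (A \<inter> {1-\<alpha>..<1})" using Ab(2) by auto
    have e2: "(A \<inter> {1-\<alpha>..<1}) - (A \<inter> {0..<1-\<alpha>}) = A \<inter> {1-\<alpha>..<1}" by auto
    show ?thesis using measure_Un2[OF L1(1) L1(2)] e1 e2 by simp
  qed
  finally have mA': "measure lebesgue A' = measure lebesgue A" .
  have disj: "A \<inter> A' = {}"
  proof (rule ccontr)
    assume "A \<inter> A' \<noteq> {}"
    then obtain y where y: "y \<in> A" "frac (y - \<alpha>) \<in> A" by (auto simp: A'_def)
    have "frac (y - frac (y - \<alpha>)) = frac (y - (y - \<alpha>))" by (rule frac_diff_simp)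
    also have "\<dots> = \<alpha>" using \<alpha> by simp
    finally show False using av y by blast
  qed
  have AA'sub: "A \<union> A' \<subseteq> {0..<1}" using Ab(2) by (auto simp: A'_def)
  have AA'l: "A \<union> A' \<in> lmeasurable" using Al A'l by auto
  have mU: "measure lebesgue (A \<union> A') = 2 * measure lebesgue A"
  proof -
    have "A' - A = A'" using disj by blast
    then show ?thesis using measure_Un2[OF Al A'l] mA' by simp
  qed
  have mle: "measure lebesgue (A \<union> A') \<le> 1"
  proof -
    have "measure lebesgue (A \<union> A') \<le> measure lebesgue {0..<1::real}"
      by (rule measure_mono_fmeasurable[OF AA'sub]) (use AA'l Ico_lm[of 0 1] in auto)
    then show ?thesis using Ico_lm[of 0 1] by simp
  qed
  have le: "measure lebesgue A \<le> 1/2" using mU mle by simp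
  have ne: "measure lebesgue A \<noteq> 1/2"
  proof
    assume half: "measure lebesgue A = 1/2"
    define N0 where "N0 = {0..<1::real} - (A \<union> A')"
    have N0m: "measure lebesgue N0 = 0"
    proof -
      have "measure lebesgue N0 = measure lebesgue {0..<1::real} - measure lebesgue (A \<union> A')"
        unfolding N0_def by (rule measure_Diff) (use AA'l AA'sub Ico_lm[of 0 1] in auto)
      then show ?thesis using mU half Ico_lm[of 0 1] by simp
    qed
    have N0l: "N0 \<in> lmeasurable" unfolding N0_def using AA'l Ico_lm[of 0 1] by auto
    have N0n: "N0 \<in> null_sets lebesgue"
      using N0l N0m by (simp add: null_setsI fmeasurableD emeasure_eq_measure2)
    define B where "B = (\<Union>n::int. (+) (of_int n) ` N0)"
    have Bn: "B \<in> null_sets lebesgue"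
      unfolding B_def by (intro null_sets_UN' countableI_type null_translate N0n)
    have base: "AE y in lebesgue. (frac (y - \<alpha>) \<in> A \<longleftrightarrow> frac y \<notin> A)"
    proof (rule AE_I'[OF Bn], rule subsetI)
      fix y assume "y \<in> {y \<in> space lebesgue. \<not> (frac (y - \<alpha>) \<in> A \<longleftrightarrow> frac y \<notin> A)}"
      then have bad: "\<not> (frac (y - \<alpha>) \<in> A \<longleftrightarrow> frac y \<notin> A)" by simp
      have fyA': "frac y \<in> A' \<longleftrightarrow> frac (y - \<alpha>) \<in> A"
        by (simp add: A'_def frac_lt_1 frac_shift_int)
      have "frac y \<in> N0"
        using bad fyA' disj by (auto simp: N0_def frac_lt_1)
      moreover have "y = of_int \<lfloor>y\<rfloor> + frac y" by (simp add: frac_def)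
      ultimately show "y \<in> B" unfolding B_def by (metis UNIV_I UN_I image_eqI)
    qed
    have ind: "AE y in lebesgue. (frac (y - real n * \<alpha>) \<in> A \<longleftrightarrow> (frac y \<in> A \<longleftrightarrow> even n))" for n
    proof (induction n)
      case 0
      show ?case by simp
    next
      case (Suc n)
      have h1: "AE y in lebesgue. (frac ((y - \<alpha>) - real n * \<alpha>) \<in> A \<longleftrightarrow> (frac (y - \<alpha>) \<in> A \<longleftrightarrow> even n))"
        using AE_translate[OF Suc.IH, of \<alpha>] by simp
      show ?case
        using h1 base
      proof eventually_elim
        case (elim y)
        have e: "frac (y - real (Suc n) * \<alpha>) = frac ((y - \<alpha>) - real n * \<alpha>)" by (simp add: algebra_simps)
        show ?case unfolding e using elim by auto
      qed
    qed
    have irr2: "2 * \<alpha> \<notin> \<rat>"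
    proof
      assume "2 * \<alpha> \<in> \<rat>"
      then have "(2 * \<alpha>) / 2 \<in> \<rat>" by (intro Rats_divide) auto
      then show False using \<alpha>(3) by simp
    qed
    obtain \<eta> where \<eta>: "\<eta> > 0" and st: "\<And>s. 0 < s \<and> s < \<eta> \<Longrightarrow> measure lebesgue (A \<inter> (+) s ` A) > 0"
      using steinhaus[OF Al bA] half by auto
    obtain h k where hk: "k > 0" "\<bar>of_int k * (2 * \<alpha>) - of_int h - (\<eta>/2 - \<alpha>)\<bar> < \<eta>/2"
      using sequence_of_fractional_parts_is_dense[where \<epsilon>="\<eta>/2" and \<alpha>="\<eta>/2 - \<alpha>", OF irr2] \<eta> by (metis half_gt_zero)
    define s where "s = (2 * of_int k + 1) * \<alpha> - of_int h"
    have seq: "s - \<eta>/2 = of_int k * (2 * \<alpha>) - of_int h - (\<eta>/2 - \<alpha>)" by (simp add: s_def algebra_simps)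
    have "\<bar>s - \<eta>/2\<bar> < \<eta>/2" by (subst seq) (rule hk(2))
    then have "s - \<eta>/2 < \<eta>/2 \<and> - (s - \<eta>/2) < \<eta>/2" by (simp only: abs_less_iff)
    then have s: "0 < s" "s < \<eta>" by linarith+
    define n where "n = nat (2 * k + 1)"
    have rn: "real n = 2 * of_int k + 1" using hk(1) by (simp add: n_def)
    have odd: "\<not> even n"
    proof -
      have "n = 2 * nat k + 1" using hk(1) by (simp add: n_def nat_add_distrib nat_mult_distrib)
      then show ?thesis by simp
    qed
    have "AE y in lebesgue. \<not> (frac y \<in> A \<and> frac (y - real n * \<alpha>) \<in> A)"
      using ind[of n] by eventually_elim (use odd in auto)
    then obtain N where N0': "{y\<in>space lebesgue. \<not> \<not> (frac y \<in> A \<and> frac (y - real n * \<alpha>) \<in> A)} \<subseteq> N"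
      and Nn: "N \<in> null_sets lebesgue"
      by (rule AE_E) (metis null_setsI)
    have sub: "A \<inter> (+) s ` A \<subseteq> N"
    proof
      fix y assume y: "y \<in> A \<inter> (+) s ` A"
      then obtain z where z: "z \<in> A" "y = s + z" by auto
      have fy: "frac y = y" using y Ab(2) by (intro frac_eq_id) auto
      have "y - real n * \<alpha> = z + of_int (- h)" using z(2) rn by (simp add: s_def algebra_simps)
      then have "frac (y - real n * \<alpha>) = frac z" by (simp only: frac_add_of_int_right)
      also have "\<dots> = z" using z Ab(2) by (intro frac_eq_id) auto
      finally show "y \<in> N" using N0' y z fy by auto
    qed
    have il: "A \<inter> (+) s ` A \<in> sets lebesgue"
      using Aleb lebesgue_sets_translation[OF Aleb, of s] by auto
    have "A \<inter> (+) s ` A \<in> null_sets lebesgue" by (rule null_sets_subset[OF Nn il sub])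
    then have "measure lebesgue (A \<inter> (+) s ` A) = 0" by (rule measure_eq_0_null_sets)
    with st[of s] s show False by simp
  qed
  show ?thesis using le ne mA by simp
qed



lemma indep_insert1:
  assumes fin: "finite D" and D01: "D \<subseteq> {0<..<1}" and li: "one_Q_lin_indep D"
  shows "module.independent (\<lambda>r x. of_int r * x) (insert (1::real) D)"
proof -
  interpret Modules.module "(\<lambda>r. (*) (real_of_int r))"
    by (simp add: Modules.module.intro distrib_left mult.commute)
  have n1: "1 \<notin> D" using D01 by auto
  show ?thesis
    unfolding independent_explicit_module
  proof (intro allI impI)
    fix t u v
    assume t: "finite t" "t \<subseteq> insert 1 D" and s0: "(\<Sum>v\<in>t. real_of_int (u v) * v) = 0" and v: "v \<in> t"
    define c0 :: rat where "c0 = (if 1 \<in> t then of_int (u 1) else 0)"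
    define c :: "real \<Rightarrow> rat" where "c = (\<lambda>a. if a \<in> t then of_int (u a) else 0)"
    have sD: "(\<Sum>a\<in>D. of_rat (c a) * a) = (\<Sum>a\<in>D \<inter> t. real_of_int (u a) * a)"
    proof -
      have "(\<Sum>a\<in>D. of_rat (c a) * a) = (\<Sum>a\<in>D. if a \<in> t then real_of_int (u a) * a else 0)"
        by (rule sum.cong) (auto simp: c_def)
      also have "\<dots> = (\<Sum>a\<in>D \<inter> t. real_of_int (u a) * a)"
        using fin by (simp add: sum.inter_restrict)
      finally show ?thesis .
    qed
    have split: "(\<Sum>v\<in>t. real_of_int (u v) * v) = (\<Sum>v\<in>t \<inter> D. real_of_int (u v) * v) + (\<Sum>v\<in>t - D. real_of_int (u v) * v)"
      using t(1) by (rule sum.Int_Diff)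
    have tD: "t - D = (if 1 \<in> t then {1} else {})" using t(2) n1 by auto
    have "(\<Sum>v\<in>t - D. real_of_int (u v) * v) = of_rat c0"
      unfolding tD c0_def by simp
    moreover have "t \<inter> D = D \<inter> t" by blast
    ultimately have "of_rat c0 + (\<Sum>a\<in>D. of_rat (c a) * a) = 0"
      using s0 split sD by simp
    then have z: "c0 = 0" "\<forall>a\<in>D. c a = 0"
      using li unfolding one_Q_lin_indep_def by blast+
    show "u v = 0"
    proof (cases "v = 1")
      case True then show ?thesis using z(1) v by (simp add: c0_def)
    next
      case False
      then have "v \<in> D" using v t(2) by auto
      then have "c v = 0" using z(2) by blast
      then show ?thesis using v by (simp add: c_def)
    qed
  qed
qed

lemma kron_D:
  assumes fin: "finite D" and ne: "D \<noteq> {}" and D01: "D \<subseteq> {0<..<1}" and li: "one_Q_lin_indep D"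
    and e: "\<epsilon> > 0" and e2: "\<epsilon> \<le> 1/2"
  obtains K :: nat where "K > 0" "\<And>a. a \<in> D \<Longrightarrow> \<exists>j::int. \<bar>real K * a - of_int j - 1/2\<bar> < \<epsilon>"
proof -
  define n where "n = card D"
  define xs where "xs = sorted_list_of_set D"
  define \<theta> where "\<theta> = (\<lambda>i. if i < n then xs ! i else (1::real))"
  have len: "length xs = n" "distinct xs" "set xs = D" using fin by (simp_all add: xs_def n_def)
  have \<theta>n: "\<theta> n = 1" by (simp add: \<theta>_def)
  have im1: "\<theta> ` {..<n} = D"
  proof -
    have "\<theta> ` {..<n} = (\<lambda>i. xs ! i) ` {..<n}" by (auto simp: \<theta>_def)
    also have "\<dots> = set xs" using len(1) by (auto simp: set_conv_nth)
    finally show ?thesis using len(3) by simp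
  qed
  have im: "\<theta> ` {..n} = insert 1 D"
  proof -
    have "{..n} = insert n {..<n}" by auto
    then show ?thesis using im1 \<theta>n by simp
  qed
  have n1: "1 \<notin> D" using D01 by auto
  have inj: "inj_on \<theta> {..n}"
  proof (rule inj_onI)
    fix i j assume i: "i \<in> {..n}" and j: "j \<in> {..n}" and eq: "\<theta> i = \<theta> j"
    have mem: "\<theta> i \<in> D" if "i < n" for i using im1 that by blast
    show "i = j"
    proof (cases "i < n"; cases "j < n")
      assume "i < n" "j < n"
      then show ?thesis using eq len nth_eq_iff_index_eq by (auto simp: \<theta>_def)
    next
      assume "i < n" "\<not> j < n"
      then show ?thesis using eq mem[of i] n1 by (auto simp: \<theta>_def)
    next
      assume "\<not> i < n" "j < n"
      then show ?thesis using eq mem[of j] n1 by (auto simp: \<theta>_def)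
    next
      assume "\<not> i < n" "\<not> j < n"
      then show ?thesis using i j by auto
    qed
  qed
  have indp: "module.independent (\<lambda>r x. of_int r * x) (\<theta> ` {..n})"
    unfolding im by (rule indep_insert1[OF fin D01 li])
  obtain k m where km: "\<And>i. i < n \<Longrightarrow> \<bar>of_int k * \<theta> i - of_int (m i) - 1/2\<bar> < \<epsilon>"
    using Kronecker_thm_2[OF indp inj \<theta>n e, of "\<lambda>_. 1/2"] by blast
  have kD: "\<exists>j::int. \<bar>of_int k * a - of_int j - 1/2\<bar> < \<epsilon>" if aD: "a \<in> D" for a
  proof -
    obtain i where "i < n" "a = \<theta> i" using im1 aD by force
    then show ?thesis using km by blast
  qed
  show ?thesis
  proof (cases "k \<ge> 0")
    case True
    have "\<exists>j::int. \<bar>real (nat k) * a - of_int j - 1/2\<bar> < \<epsilon>" if "a \<in> D" for a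
      using kD[OF that] True by simp
    moreover have "nat k > 0"
    proof (rule ccontr)
      assume "\<not> nat k > 0" 
      then have "k = 0" using True by simp
      obtain a where "a \<in> D" using ne by blast
      with kD obtain j :: int where "\<bar>of_int k * a - of_int j - 1/2\<bar> < \<epsilon>" by blast
      then have lt: "\<bar>of_int j + 1/2\<bar> < (1/2::real)" using \<open>k = 0\<close> e2 by simp
      show False
      proof (cases "j \<ge> 0")
        case True then have "real_of_int j \<ge> 0" by simp
        then show False using lt by simp
      next
        case False then have "real_of_int j \<le> -1" by simp
        then show False using lt by simp
      qed
    qed
    ultimately show ?thesis using that by blast
  next
    case False
    have "\<exists>j::int. \<bar>real (nat (-k)) * a - of_int j - 1/2\<bar> < \<epsilon>" if aD: "a \<in> D" for a
    proof -
      obtain j :: int where j: "\<bar>of_int k * a - of_int j - 1/2\<bar> < \<epsilon>" using kD[OF aD] by blast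
      have "real (nat (-k)) * a - of_int (- j - 1) - 1/2 = - (of_int k * a - of_int j - 1/2)"
        using False by simp
      then have "\<bar>real (nat (-k)) * a - of_int (- j - 1) - 1/2\<bar> < \<epsilon>" using j by (simp only: abs_minus_cancel)
      then show ?thesis by blast
    qed
    moreover have "nat (-k) > 0" using False by simp
    ultimately show ?thesis using that by blast
  qed
qed



lemma half_int: "\<bar>real_of_int M + 1/2\<bar> \<ge> 1/2"
proof (cases "M \<ge> 0")
  case True then have "real_of_int M \<ge> 0" by simp
  then show ?thesis by simp
next
  case False then have "real_of_int M \<le> -1" by simp
  then show ?thesis by simp
qed

lemma construct:
  fixes K :: nat and \<epsilon> :: real and D :: "real set"
  assumes K: "K > 0" and e: "\<epsilon> > 0" "\<epsilon> < 1/2"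
    and kD: "\<And>a. a \<in> D \<Longrightarrow> \<exists>j::int. \<bar>real K * a - of_int j - 1/2\<bar> < \<epsilon>"
  shows "\<exists>A. torus_avoiding D A \<and> measure lborel A = 1/2 - \<epsilon>"
proof -
  define c where "c = 1/2 - \<epsilon>"
  have c: "0 < c" "c < 1" using e by (auto simp: c_def)
  have Kp: "real K > 0" using K by simp
  define I where "I = (\<lambda>j::nat. {real j / real K ..< (real j + c) / real K})"
  define A where "A = (\<Union>j<K. I j)"
  have memI: "x \<in> I j \<longleftrightarrow> real j \<le> real K * x \<and> real K * x < real j + c" for x j
    using Kp by (simp add: I_def field_simps)
  have fl: "\<lfloor>real K * x\<rfloor> = int j" if "x \<in> I j" for x j
    using that c unfolding memI by (simp add: floor_eq_iff)
  have A01: "A \<subseteq> {0..<1}"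
  proof
    fix x assume "x \<in> A"
    then obtain j where j: "j < K" "x \<in> I j" by (auto simp: A_def)
    then have h: "real j \<le> real K * x" "real K * x < real j + c" by (auto simp: memI)
    have "0 \<le> real K * x" using h(1) by linarith
    then have x0: "0 \<le> x" using Kp by (simp add: zero_le_mult_iff)
    have "real j + 1 \<le> real K" using j(1) by linarith
    then have "real K * x < real K * 1" using h(2) c by linarith
    then have "x < 1" using Kp by simp
    with x0 show "x \<in> {0..<1}" by simp
  qed
  have Ab: "A \<in> sets borel" unfolding A_def I_def by auto
  have av: "\<forall>x\<in>A. \<forall>y\<in>A. frac (x - y) \<notin> D"
  proof (intro ballI notI)
    fix x y assume x: "x \<in> A" and y: "y \<in> A" and fD: "frac (x - y) \<in> D"
    obtain j1 where j1: "x \<in> I j1" using x by (auto simp: A_def)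
    obtain j2 where j2: "y \<in> I j2" using y by (auto simp: A_def)
    obtain j :: int where j: "\<bar>real K * frac (x - y) - of_int j - 1/2\<bar> < \<epsilon>" using kD[OF fD] by blast
    define f where "f = \<lfloor>x - y\<rfloor>"
    have xy: "x - y = frac (x - y) + of_int f" by (simp add: f_def frac_def)
    define d where "d = (real K * x - real j1) - (real K * y - real j2)"
    have d: "\<bar>d\<bar> < c" using j1 j2 unfolding memI d_def by linarith
    define M where "M = j + int K * f - int j1 + int j2"
    have "d = real K * (x - y) - real j1 + real j2" by (simp add: d_def algebra_simps)
    also have "\<dots> = (real K * frac (x - y) - of_int j - 1/2) + (of_int M + 1/2)"
      by (subst xy) (simp add: M_def algebra_simps)
    finally have dM: "of_int M + 1/2 = d - (real K * frac (x - y) - of_int j - 1/2)" by simp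
    have "\<bar>real_of_int M + 1/2\<bar> < c + \<epsilon>" unfolding dM using d j by linarith
    then show False using half_int[of M] by (simp add: c_def)
  qed
  have disj: "disjoint_family_on I {..<K}"
    unfolding disjoint_family_on_def
  proof (intro ballI impI)
    fix i j assume "i \<in> {..<K}" "j \<in> {..<K}" "i \<noteq> j"
    show "I i \<inter> I j = {}"
    proof (rule ccontr)
      assume "I i \<inter> I j \<noteq> {}"
      then obtain x where "x \<in> I i" "x \<in> I j" by blast
      then have "int i = int j" using fl by metis
      then show False using \<open>i \<noteq> j\<close> by simp
    qed
  qed
  have mI: "measure lborel (I j) = c / real K" for j
  proof -
    have "real j / real K \<le> (real j + c) / real K" using Kp c by (simp add: divide_right_mono)
    then have "measure lborel (I j) = (real j + c) / real K - real j / real K" by (simp add: I_def)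
    also have "\<dots> = c / real K" by (simp add: add_divide_distrib)
    finally show ?thesis .
  qed
  have "measure lborel A = (\<Sum>j<K. measure lborel (I j))"
    unfolding A_def
  proof (rule measure_finite_Union)
    show "finite {..<K}" by simp
    show "I ` {..<K} \<subseteq> sets lborel" by (auto simp: I_def)
    show "disjoint_family_on I {..<K}" by (rule disj)
    fix j show "emeasure lborel (I j) \<noteq> \<infinity>"
      using c Kp by (simp add: I_def divide_right_mono)
  qed
  also have "\<dots> = c" using mI Kp by simp
  finally have mA: "measure lborel A = 1/2 - \<epsilon>" by (simp add: c_def)
  have "torus_avoiding D A" unfolding torus_avoiding_def using Ab A01 av by blast
  with mA show ?thesis by blast
qed


theorem mainTheorem15:
  fixes D :: "real set"
  assumes "finite D" and "D \<noteq> {}" and "D \<subseteq> {0<..<1}"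
    and "one_Q_lin_indep D"
  shows "Md_T D = 1/2 \<and> \<not> (\<exists>A. torus_avoiding D A \<and> measure lborel A = 1/2)"
proof -
  obtain \<alpha> where \<alpha>: "\<alpha> \<in> D" using assms(2) by blast
  have \<alpha>01: "0 < \<alpha>" "\<alpha> < 1" using assms(3) \<alpha> by auto
  have irr: "\<alpha> \<notin> \<rat>" by (rule irrat_of_D[OF assms(1) assms(4) \<alpha>])
  have ub: "measure lborel A < 1/2" if "torus_avoiding D A" for A
  proof -
    from that have h: "A \<in> sets borel" "A \<subseteq> {0..<1}" "\<forall>x\<in>A. \<forall>y\<in>A. frac (x - y) \<notin> D"
      by (auto simp: torus_avoiding_def)
    then have "\<forall>x\<in>A. \<forall>y\<in>A. frac (x - y) \<noteq> \<alpha>" using \<alpha> by metis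
    then show ?thesis using upper_bound[OF h(1) h(2) _ \<alpha>01 irr] by blast
  qed
  have lb: "\<exists>A. torus_avoiding D A \<and> measure lborel A = 1/2 - \<epsilon>" if e: "\<epsilon> > 0" "\<epsilon> < 1/2" for \<epsilon>
  proof -
    have e2: "\<epsilon> \<le> 1/2" using e by simp
    obtain K where K: "K > 0" "\<And>a. a \<in> D \<Longrightarrow> \<exists>j::int. \<bar>real K * a - of_int j - 1/2\<bar> < \<epsilon>"
      using kron_D[OF assms(1) assms(2) assms(3) assms(4) e(1) e2] by blast
    show ?thesis by (rule construct[OF K(1) e K(2)])
  qed
  let ?S = "{measure lborel A | A. torus_avoiding D A}"
  have sup: "Sup ?S = 1/2"
  proof (rule cSup_eq_non_empty)
    show "?S \<noteq> {}" using lb[of "1/4"] by auto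
  next
    fix x assume "x \<in> ?S"
    then show "x \<le> 1/2" using ub by (auto intro: less_imp_le)
  next
    fix y assume h: "\<And>x. x \<in> ?S \<Longrightarrow> x \<le> y"
    show "1/2 \<le> y"
    proof (rule ccontr)
      assume ny: "\<not> 1/2 \<le> y"
      define \<epsilon> where "\<epsilon> = min ((1/2 - y)/2) (1/4)"
      have e: "\<epsilon> > 0" "\<epsilon> < 1/2" using ny by (auto simp: \<epsilon>_def)
      obtain A where A: "torus_avoiding D A" "measure lborel A = 1/2 - \<epsilon>" using lb[OF e] by blast
      have "1/2 - \<epsilon> \<in> ?S" using A(1) A(2)[symmetric] by blast
      then have "1/2 - \<epsilon> \<le> y" by (rule h)
      moreover have "\<epsilon> \<le> (1/2 - y)/2" unfolding \<epsilon>_def by (rule min.cobounded1)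
      ultimately have "1/2 - y \<le> (1/2 - y) / (2::real)" by linarith
      then have "1/2 - y \<le> (0::real)" by simp
      then show False using ny by simp
    qed
  qed
  have "Md_T D = 1/2" unfolding Md_T_def using sup by simp
  moreover have "\<not> (\<exists>A. torus_avoiding D A \<and> measure lborel A = 1/2)" using ub by force
  ultimately show ?thesis by blast
qed

end
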